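(* Let $\mathcal{AF}_{\vdash}=(\vdash,\overline{\cdot},\widehat{\cdot})$ be a setting that satisfies Pre-Relevance. Then for each $\mathsf{Sem}\in\{\mathsf{Grd},\mathsf{Prf}\}$ the consequence relation $\mathrel{\mid\!\sim}^{\mathcal{AF}_{\vdash}}_{\mathsf{Sem}}$ satisfies Non-Interference: for all $\mathcal{S}_1\cup\{\phi\}\cup\mathcal{S}_2\subseteq\mathcal{L}$ with $(\mathcal{S}_1\cup\{\phi\})\mid\mathcal{S}_2$, we have $\mathcal{S}_1\mathrel{\mid\!\sim}_{\mathsf{Sem}}\phi$ iff $\mathcal{S}_1\cup\mathcal{S}_2\mathrel{\mid\!\sim}_{\mathsf{Sem}}\phi$.
   Context: $\mathcal{L}$ is the set of formulas of a language built from propositional atoms; for $\mathcal{S}\subseteq\mathcal{L}$, $\mathsf{Atoms}(\mathcal{S})$ is the set of atoms occurring in formulas of $\mathcal{S}$, and $\mathcal{S}_1\mid\mathcal{S}_2$ means $\mathsf{Atoms}(\mathcal{S}_1)\cap\mathsf{Atoms}(\mathcal{S}_2)=\emptyset$. $\wp_{\sf fin}(X)$ is the set of finite subsets of $X$. A setting is a triple $(\vdash,\overline{\cdot},\widehat{\cdot})$ where ${\vdash}\subseteq\wp_{\sf fin}(\mathcal{L})\times\mathcal{L}$ is an arbitrary relation (no reflexivity, monotonicity or transitivity assumed), $\overline{\cdot}:\mathcal{L}\to\wp(\mathcal{L})$ is a contrariness function, and $\widehat{\cdot}$ assigns to each nonempty finite set of formulas a finite set of formulas (with the convention $\widehat{\emptyset}=\emptyset$).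 For $\mathcal{S}\subseteq\mathcal{L}$, $\mathit{Arg}_{\vdash}(\mathcal{S})$ is the set of pairs $(\Gamma,\gamma)$ with $\Gamma\subseteq\mathcal{S}$ finite and $\Gamma\vdash\gamma$; $\mathsf{Supp}((\Gamma,\gamma))=\Gamma$, $\mathsf{Conc}((\Gamma,\gamma))=\gamma$. $\mathcal{AF}_{\vdash}(\mathcal{S})$ is the directed graph on $\mathit{Arg}_{\vdash}(\mathcal{S})$ in which $(\Gamma,\gamma)$ attacks $(\Gamma',\gamma')$ iff $\gamma\in\overline{\phi}$ for some $\phi\in\widehat{\Gamma'}$. For $\mathcal{A}\subseteq\mathit{Arg}_{\vdash}(\mathcal{S})$: conflict-free = no member attacks a member; $\mathcal{A}$ defends $a$ iff every attacker of $a$ in $\mathit{Arg}_{\vdash}(\mathcal{S})$ is attacked by some member of $\mathcal{A}$; admissible = conflict-free and defends all its members; complete = admissible and contains every argument it defends; preferred = $\subseteq$-maximal complete; grounded = the $\subseteq$-minimal complete set; stable = admissible and attacks every argument not in it. $\mathsf{Grd},\mathsf{Prf}$ denote these semantics. Consequence: $\mathcal{S}\mathrel{\mid\!\sim}^{\mathcal{AF}_{\vdash}}_{\mathsf{Sem}}\phi$ iff every $\mathsf{Sem}$-extension of $\mathcal{AF}_{\vdash}(\mathcal{S})$ contains an argument with conclusion $\phi$. Pre-Relevance: (a) $\vdash$ is Pre-Relevant iff for all $\mathcal{S}_1,\mathcal{S}_2,\phi$ with $\mathcal{S}_1\cup\{\phi\}\mid\mathcal{S}_2$, if $\mathcal{S}_1\cup\mathcal{S}_2\vdash\phi$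 then $\mathcal{S}_1'\vdash\phi$ for some $\mathcal{S}_1'\subseteq\mathcal{S}_1$. (b) The setting is prime iff for all sets of atoms $\mathcal{A}_1\mid\mathcal{A}_2$, all finite $\mathcal{S}_1,\mathcal{T}_1,\mathcal{S}_2,\mathcal{T}_2$ with $\mathsf{Atoms}(\mathcal{S}_i),\mathsf{Atoms}(\mathcal{T}_i)\subseteq\mathcal{A}_i$, and all $\phi,\psi$ with $\psi\in\overline{\phi}$ and $\phi\in\widehat{\mathcal{T}_1\cup\mathcal{T}_2}$: if $\mathcal{S}_1\cup\mathcal{S}_2\vdash\psi$ then there are $i\in\{1,2\}$, $\mathcal{S}_i'\subseteq\mathcal{S}_i$, $\phi_i\in\widehat{\mathcal{T}_i}$ and $\psi_i\in\overline{\phi_i}$ with $\mathcal{S}_i'\vdash\psi_i$. (c) A setting satisfies Pre-Relevance iff $\vdash$ is Pre-Relevant, the setting is prime, and $\widehat{\Delta}\subseteq\widehat{\Delta\cup\Delta'}$ for all finite $\Delta,\Delta'$. *)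

theory Defs
  imports Main
begin

text \<open>A setting is (der, contr, hat): der relates finite sets of formulas to formulas
  (only its values on finite sets are ever used), contr is the contrariness function,
  hat assigns to finite sets finite sets of formulas.\<close>

definition Atoms :: "('f \<Rightarrow> 'a set) \<Rightarrow> 'f set \<Rightarrow> 'a set" where
  "Atoms at S = (\<Union>x\<in>S. at x)"

definition indep :: "('f \<Rightarrow> 'a set) \<Rightarrow> 'f set \<Rightarrow> 'f set \<Rightarrow> bool" where
  "indep at S1 S2 \<longleftrightarrow> Atoms at S1 \<inter> Atoms at S2 = {}"

definition Arg :: "('f set \<Rightarrow> 'f \<Rightarrow> bool) \<Rightarrow> 'f set \<Rightarrow> ('f set \<times> 'f) set" where
  "Arg der S = {(\<Gamma>, \<gamma>). finite \<Gamma> \<and> \<Gamma> \<subseteq> S \<and> der \<Gamma> \<gamma>}"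

definition attacks :: "('f \<Rightarrow> 'f set) \<Rightarrow> ('f set \<Rightarrow> 'f set) \<Rightarrow> ('f set \<times> 'f) \<Rightarrow> ('f set \<times> 'f) \<Rightarrow> bool" where
  "attacks contr hat a b \<longleftrightarrow> (\<exists>\<phi>\<in>hat (fst b). snd a \<in> contr \<phi>)"

definition conflict_free where
  "conflict_free contr hat E \<longleftrightarrow> (\<forall>a\<in>E. \<forall>b\<in>E. \<not> attacks contr hat a b)"

definition defends where
  "defends der contr hat S E a \<longleftrightarrow>
     (\<forall>b\<in>Arg der S. attacks contr hat b a \<longrightarrow> (\<exists>c\<in>E. attacks contr hat c b))"

definition admissible where
  "admissible der contr hat S E \<longleftrightarrow> E \<subseteq> Arg der S \<and> conflict_free contr hat E \<and>
     (\<forall>a\<in>E. defends der contr hat S E a)"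

definition complete where
  "complete der contr hat S E \<longleftrightarrow> admissible der contr hat S E \<and>
     (\<forall>a\<in>Arg der S. defends der contr hat S E a \<longrightarrow> a \<in> E)"

definition preferred where
  "preferred der contr hat S E \<longleftrightarrow> complete der contr hat S E \<and>
     \<not> (\<exists>E'. complete der contr hat S E' \<and> E \<subset> E')"

definition grounded where
  "grounded der contr hat S E \<longleftrightarrow> complete der contr hat S E \<and>
     \<not> (\<exists>E'. complete der contr hat S E' \<and> E' \<subset> E)"

datatype sem = Grd | Prf

fun extension :: "sem \<Rightarrow> ('f set \<Rightarrow> 'f \<Rightarrow> bool) \<Rightarrow> ('f \<Rightarrow> 'f set) \<Rightarrow> ('f set \<Rightarrow> 'f set)
   \<Rightarrow> 'f set \<Rightarrow> ('f set \<times> 'f) set \<Rightarrow> bool" where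
  "extension Grd = grounded"
| "extension Prf = preferred"

definition nmcons where
  "nmcons Sem der contr hat S \<phi> \<longleftrightarrow>
     (\<forall>E. extension Sem der contr hat S E \<longrightarrow> (\<exists>a\<in>E. snd a = \<phi>))"

definition setting :: "('f set \<Rightarrow> 'f set) \<Rightarrow> bool" where
  "setting hat \<longleftrightarrow> hat {} = {} \<and> (\<forall>\<Delta>. finite \<Delta> \<longrightarrow> finite (hat \<Delta>))"

definition pre_relevant_der where
  "pre_relevant_der at der \<longleftrightarrow>
    (\<forall>S1 S2 \<phi>. finite S1 \<and> finite S2 \<and> indep at (S1 \<union> {\<phi>}) S2 \<and> der (S1 \<union> S2) \<phi>
        \<longrightarrow> (\<exists>S1'. S1' \<subseteq> S1 \<and> der S1' \<phi>))"

definition prime where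
  "prime at der contr hat \<longleftrightarrow>
    (\<forall>A1 A2 S1 T1 S2 T2 \<phi> \<psi>. A1 \<inter> A2 = {} \<and>
        finite S1 \<and> finite T1 \<and> finite S2 \<and> finite T2 \<and>
        Atoms at S1 \<subseteq> A1 \<and> Atoms at T1 \<subseteq> A1 \<and> Atoms at S2 \<subseteq> A2 \<and> Atoms at T2 \<subseteq> A2 \<and>
        \<psi> \<in> contr \<phi> \<and> \<phi> \<in> hat (T1 \<union> T2) \<and> der (S1 \<union> S2) \<psi>
      \<longrightarrow> (\<exists>S1' \<phi>1 \<psi>1. S1' \<subseteq> S1 \<and> \<phi>1 \<in> hat T1 \<and> \<psi>1 \<in> contr \<phi>1 \<and> der S1' \<psi>1)
        \<or> (\<exists>S2' \<phi>2 \<psi>2. S2' \<subseteq> S2 \<and> \<phi>2 \<in> hat T2 \<and> \<psi>2 \<in> contr \<phi>2 \<and> der S2' \<psi>2))"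

definition pre_relevance where
  "pre_relevance at der contr hat \<longleftrightarrow> pre_relevant_der at der \<and> prime at der contr hat \<and>
     (\<forall>\<Delta> \<Delta>'. finite \<Delta> \<and> finite \<Delta>' \<longrightarrow> hat \<Delta> \<subseteq> hat (\<Delta> \<union> \<Delta>'))"

definition non_interference where
  "non_interference at Sem der contr hat \<longleftrightarrow>
    (\<forall>S1 S2 \<phi>. indep at (S1 \<union> {\<phi>}) S2 \<longrightarrow>
        (nmcons Sem der contr hat S1 \<phi> \<longleftrightarrow> nmcons Sem der contr hat (S1 \<union> S2) \<phi>))"

end

theory Submission
  imports Defs
begin

definition defset where
  "defset der contr hat S X = {a \<in> Arg der S. defends der contr hat S X a}"

lemma defends_mono:
  "defends der contr hat S X a \<Longrightarrow> X \<subseteq> Y \<Longrightarrow> defends der contr hat S Y a"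
  unfolding defends_def by blast

lemma mono_defset: "mono (defset der contr hat S)"
  unfolding mono_def defset_def using defends_mono by blast

lemma complete_fix:
  assumes "complete der contr hat S E"
  shows "defset der contr hat S E = E"
  using assms unfolding complete_def admissible_def defset_def by blast

lemma lfp_cf: "conflict_free contr hat (lfp (defset der contr hat S))"
proof -
  let ?F = "defset der contr hat S"
  let ?U = "lfp ?F"
  have U: "?U = ?F ?U" by (rule lfp_unfold[OF mono_defset])
  define Y where "Y = {x \<in> Arg der S. \<not> (\<exists>u\<in>?U. attacks contr hat u x)}"
  have "?F Y \<subseteq> Y"
  proof
    fix x assume x: "x \<in> ?F Y"
    hence xa: "x \<in> Arg der S" and xd: "defends der contr hat S Y x" unfolding defset_def by auto
    have "\<not> (\<exists>u\<in>?U. attacks contr hat u x)"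
    proof
      assume "\<exists>u\<in>?U. attacks contr hat u x"
      then obtain u where u: "u \<in> ?U" "attacks contr hat u x" by blast
      have "u \<in> ?F ?U" using u U by simp
      hence ua: "u \<in> Arg der S" and ud: "defends der contr hat S ?U u" unfolding defset_def by auto
      obtain y where y: "y \<in> Y" "attacks contr hat y u" using xd ua u unfolding defends_def by blast
      have "y \<in> Arg der S" using y Y_def by simp
      then obtain u' where "u' \<in> ?U" "attacks contr hat u' y" using ud y unfolding defends_def by blast
      thus False using y Y_def by blast
    qed
    thus "x \<in> Y" using xa Y_def by simp
  qed
  hence "?U \<subseteq> Y" by (rule lfp_lowerbound)
  thus ?thesis unfolding conflict_free_def Y_def by blast
qed

lemma lfp_complete: "complete der contr hat S (lfp (defset der contr hat S))"
proof -
  let ?F = "defset der contr hat S"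
  let ?U = "lfp ?F"
  have U: "?U = ?F ?U" by (rule lfp_unfold[OF mono_defset])
  show ?thesis unfolding complete_def admissible_def
    using lfp_cf[of contr hat der S] U unfolding defset_def by blast
qed

lemma complete_lfp_le:
  assumes "complete der contr hat S E"
  shows "lfp (defset der contr hat S) \<subseteq> E"
  by (rule lfp_lowerbound) (simp add: complete_fix[OF assms])

lemma grounded_iff: "grounded der contr hat S E \<longleftrightarrow> E = lfp (defset der contr hat S)"
proof
  assume g: "grounded der contr hat S E"
  hence c: "complete der contr hat S E" unfolding grounded_def by blast
  have le: "lfp (defset der contr hat S) \<subseteq> E" by (rule complete_lfp_le[OF c])
  have "\<not> lfp (defset der contr hat S) \<subset> E"
    using g lfp_complete[of der contr hat S] unfolding grounded_def by blast
  thus "E = lfp (defset der contr hat S)" using le by blast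
next
  assume e: "E = lfp (defset der contr hat S)"
  have "\<not> E' \<subset> E" if "complete der contr hat S E'" for E'
    using complete_lfp_le[OF that] e by blast
  thus "grounded der contr hat S E" unfolding grounded_def
    using lfp_complete e by blast
qed

lemma max_adm_complete:
  assumes adm: "admissible der contr hat S M"
    and mx: "\<forall>Y. admissible der contr hat S Y \<and> M \<subseteq> Y \<longrightarrow> Y = M"
  shows "complete der contr hat S M"
proof -
  have "a \<in> M" if a: "a \<in> Arg der S" "defends der contr hat S M a" for a
  proof -
    have cf: "conflict_free contr hat M" using adm admissible_def by blast
    have n1: "\<not> attacks contr hat x a" if "x \<in> M" for x
      using that a cf adm unfolding defends_def conflict_free_def admissible_def by blast
    have n2: "\<not> attacks contr hat a m" if "m \<in> M" for m
      using that a n1 adm unfolding defends_def admissible_def by blast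
    have n3: "\<not> attacks contr hat a a"
      using a n1 unfolding defends_def by blast
    have "admissible der contr hat S (insert a M)"
      unfolding admissible_def
    proof (intro conjI)
      show "insert a M \<subseteq> Arg der S" using a adm admissible_def by blast
      show "conflict_free contr hat (insert a M)" using cf n1 n2 n3 unfolding conflict_free_def by blast
      show "\<forall>b\<in>insert a M. defends der contr hat S (insert a M) b"
        using a adm defends_mono[of der contr hat S M _ "insert a M"] unfolding admissible_def by blast
    qed
    thus ?thesis using mx by blast
  qed
  thus ?thesis using adm unfolding complete_def by blast
qed

lemma adm_extend:
  assumes "admissible der contr hat S X"
  shows "\<exists>M. admissible der contr hat S M \<and> X \<subseteq> M \<and>
            (\<forall>Y. admissible der contr hat S Y \<and> M \<subseteq> Y \<longrightarrow> Y = M)"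
proof -
  let ?A = "{Y. admissible der contr hat S Y \<and> X \<subseteq> Y}"
  have "\<exists>M\<in>?A. \<forall>Z\<in>?A. M \<subseteq> Z \<longrightarrow> Z = M"
  proof (rule subset_Zorn_nonempty)
    show "?A \<noteq> {}" using assms by blast
    fix C assume C: "C \<noteq> {}" "subset.chain ?A C"
    have CA: "C \<subseteq> ?A" using C(2) unfolding subset_chain_def by (rule conjunct1)
    have ch: "\<forall>P\<in>C. \<forall>Q\<in>C. P \<subseteq> Q \<or> Q \<subseteq> P"
      using C(2) unfolding subset_chain_def by (rule conjunct2)
    have adm: "admissible der contr hat S P" if "P \<in> C" for P using CA that by blast
    have "admissible der contr hat S (\<Union>C)"
      unfolding admissible_def
    proof (intro conjI)
      show "\<Union>C \<subseteq> Arg der S" using adm unfolding admissible_def by blast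
      show "conflict_free contr hat (\<Union>C)" unfolding conflict_free_def
      proof (intro ballI)
        fix a b assume "a \<in> \<Union>C" "b \<in> \<Union>C"
        then obtain P Q where PQ: "P \<in> C" "Q \<in> C" "a \<in> P" "b \<in> Q" by blast
        have "P \<subseteq> Q \<or> Q \<subseteq> P" using ch PQ by blast
        then obtain R where R: "R \<in> C" "a \<in> R" "b \<in> R" using PQ by blast
        have "conflict_free contr hat R" using adm[OF R(1)] unfolding admissible_def by blast
        thus "\<not> attacks contr hat a b" using R unfolding conflict_free_def by blast
      qed
      show "\<forall>a\<in>\<Union>C. defends der contr hat S (\<Union>C) a"
      proof
        fix a assume "a \<in> \<Union>C"
        then obtain P where P: "P \<in> C" "a \<in> P" by blast
        hence "defends der contr hat S P a" using adm[OF P(1)] unfolding admissible_def by blast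
        moreover have "P \<subseteq> \<Union>C" using P by blast
        ultimately show "defends der contr hat S (\<Union>C) a" by (rule defends_mono)
      qed
    qed
    moreover have "X \<subseteq> \<Union>C" using C(1) CA by blast
    ultimately show "\<Union>C \<in> ?A" by blast
  qed
  then obtain M where M: "M \<in> ?A" and mx: "\<forall>Z\<in>?A. M \<subseteq> Z \<longrightarrow> Z = M" by (rule bexE)
  have "admissible der contr hat S M" "X \<subseteq> M" using M by simp_all
  moreover have "\<forall>Y. admissible der contr hat S Y \<and> M \<subseteq> Y \<longrightarrow> Y = M"
  proof (intro allI impI)
    fix Y assume Y: "admissible der contr hat S Y \<and> M \<subseteq> Y"
    hence "Y \<in> ?A" using \<open>X \<subseteq> M\<close> by blast
    thus "Y = M" using mx Y by blast
  qed
  ultimately show ?thesis by blast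
qed

lemma preferred_max_adm:
  assumes "preferred der contr hat S E" "admissible der contr hat S Y" "E \<subseteq> Y"
  shows "Y = E"
proof -
  obtain M where M: "admissible der contr hat S M" "Y \<subseteq> M"
    "\<forall>Z. admissible der contr hat S Z \<and> M \<subseteq> Z \<longrightarrow> Z = M"
    using adm_extend[OF assms(2)] by blast
  have "complete der contr hat S M" using max_adm_complete M by blast
  hence "M = E" using assms M unfolding preferred_def by blast
  thus ?thesis using M assms by blast
qed

lemma max_adm_preferred:
  assumes "admissible der contr hat S M"
    and "\<forall>Y. admissible der contr hat S Y \<and> M \<subseteq> Y \<longrightarrow> Y = M"
  shows "preferred der contr hat S M"
  using assms max_adm_complete unfolding preferred_def complete_def by blast



lemma Atoms_mono: "X \<subseteq> Y \<Longrightarrow> Atoms at X \<subseteq> Atoms at Y"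
  unfolding Atoms_def by blast

lemma Atoms_empty: "Atoms at {} = {}"
  unfolding Atoms_def by simp

locale ctx =
  fixes at :: "'f \<Rightarrow> 'a set" and der :: "'f set \<Rightarrow> 'f \<Rightarrow> bool"
    and contr :: "'f \<Rightarrow> 'f set" and hat :: "'f set \<Rightarrow> 'f set"
    and S1 S2 :: "'f set" and \<phi> :: 'f
  assumes st: "setting hat"
    and pr: "pre_relevance at der contr hat"
    and ind: "indep at (S1 \<union> {\<phi>}) S2"
begin

abbreviation "S \<equiv> S1 \<union> S2"
abbreviation "att \<equiv> attacks contr hat"

lemma Arg_sub: "Arg der S1 \<subseteq> Arg der S"
  unfolding Arg_def by blast

lemma red_att:
  assumes b: "b \<in> Arg der S" and a: "a \<in> Arg der S1" and ba: "att b a"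
  shows "\<exists>b'\<in>Arg der S1. fst b' \<subseteq> fst b \<and> att b' a"
proof -
  obtain \<Delta> \<psi> where bd: "b = (\<Delta>, \<psi>)" by (cases b)
  obtain \<Gamma> \<gamma> where ad: "a = (\<Gamma>, \<gamma>)" by (cases a)
  have fD: "finite \<Delta>" and DS: "\<Delta> \<subseteq> S" and dD: "der \<Delta> \<psi>" using b bd unfolding Arg_def by auto
  have fG: "finite \<Gamma>" and GS: "\<Gamma> \<subseteq> S1" using a ad unfolding Arg_def by auto
  obtain \<phi>' where p1: "\<phi>' \<in> hat \<Gamma>" and p2: "\<psi> \<in> contr \<phi>'"
    using ba bd ad unfolding attacks_def by auto
  have prime: "prime at der contr hat" using pr unfolding pre_relevance_def by blast
  have dj: "Atoms at (S1 \<union> {\<phi>}) \<inter> Atoms at S2 = {}" using ind unfolding indep_def .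
  have u: "(\<Delta> \<inter> S1) \<union> (\<Delta> - S1) = \<Delta>" by blast
  have a1: "Atoms at (\<Delta> \<inter> S1) \<subseteq> Atoms at (S1 \<union> {\<phi>})" by (rule Atoms_mono) blast
  have a2: "Atoms at \<Gamma> \<subseteq> Atoms at (S1 \<union> {\<phi>})" by (rule Atoms_mono) (use GS in blast)
  have a3: "Atoms at (\<Delta> - S1) \<subseteq> Atoms at S2" by (rule Atoms_mono) (use DS in blast)
  have "(\<exists>S1' \<phi>1 \<psi>1. S1' \<subseteq> \<Delta> \<inter> S1 \<and> \<phi>1 \<in> hat \<Gamma> \<and> \<psi>1 \<in> contr \<phi>1 \<and> der S1' \<psi>1)
        \<or> (\<exists>S2' \<phi>2 \<psi>2. S2' \<subseteq> \<Delta> - S1 \<and> \<phi>2 \<in> hat {} \<and> \<psi>2 \<in> contr \<phi>2 \<and> der S2' \<psi>2)"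
    apply (rule prime[unfolded prime_def, rule_format,
          of "Atoms at (S1 \<union> {\<phi>})" "Atoms at S2" "\<Delta> \<inter> S1" \<Gamma> "\<Delta> - S1" "{}" \<psi> \<phi>'])
    using dj fD fG p1 p2 dD u a1 a2 a3 Atoms_empty[of at]
    by auto
  moreover have "hat {} = {}" using st unfolding setting_def by blast
  ultimately obtain S1' \<phi>1 \<psi>1 where s: "S1' \<subseteq> \<Delta> \<inter> S1" "\<phi>1 \<in> hat \<Gamma>" "\<psi>1 \<in> contr \<phi>1" "der S1' \<psi>1"
    by blast
  have "(S1', \<psi>1) \<in> Arg der S1" using s fD unfolding Arg_def by (auto intro: finite_subset)
  moreover have "att (S1', \<psi>1) a" using s ad unfolding attacks_def by auto
  ultimately show ?thesis using s bd by (intro bexI[of _ "(S1', \<psi>1)"]) auto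
qed

lemma red_conc:
  assumes b: "(\<Delta>, \<phi>) \<in> Arg der S"
  shows "\<exists>\<Delta>'. \<Delta>' \<subseteq> \<Delta> \<and> (\<Delta>', \<phi>) \<in> Arg der S1"
proof -
  have fD: "finite \<Delta>" and DS: "\<Delta> \<subseteq> S" and dD: "der \<Delta> \<phi>" using b unfolding Arg_def by auto
  have prd: "pre_relevant_der at der" using pr unfolding pre_relevance_def by blast
  have dj: "Atoms at (S1 \<union> {\<phi>}) \<inter> Atoms at S2 = {}" using ind unfolding indep_def .
  have u: "(\<Delta> \<inter> S1) \<union> (\<Delta> - S1) = \<Delta>" by blast
  have "Atoms at ((\<Delta> \<inter> S1) \<union> {\<phi>}) \<subseteq> Atoms at (S1 \<union> {\<phi>})" by (rule Atoms_mono) blast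
  moreover have "Atoms at (\<Delta> - S1) \<subseteq> Atoms at S2" by (rule Atoms_mono) (use DS in blast)
  ultimately have "indep at ((\<Delta> \<inter> S1) \<union> {\<phi>}) (\<Delta> - S1)" using dj unfolding indep_def by blast
  then obtain S1' where "S1' \<subseteq> \<Delta> \<inter> S1" "der S1' \<phi>"
    using prd[unfolded pre_relevant_der_def, rule_format, of "\<Delta> \<inter> S1" "\<Delta> - S1" \<phi>] fD dD u by auto
  thus ?thesis unfolding Arg_def using fD by (intro exI[of _ S1']) (auto intro: finite_subset)
qed

lemma att_mono:
  assumes "finite (fst b)" "finite (fst b')" "fst b' \<subseteq> fst b" "att c b'"
  shows "att c b"
proof -
  have "hat (fst b') \<subseteq> hat (fst b' \<union> fst b)" using pr assms unfolding pre_relevance_def by blast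
  moreover have "fst b' \<union> fst b = fst b" using assms by blast
  ultimately show ?thesis using assms(4) unfolding attacks_def by auto
qed

lemma K0:
  assumes E: "complete der contr hat S' E" and b: "b \<in> E" and b': "b' \<in> Arg der S'"
    and sub: "fst b' \<subseteq> fst b"
  shows "b' \<in> E"
proof -
  have "b \<in> Arg der S'" using E b unfolding complete_def admissible_def by blast
  hence fb: "finite (fst b)" unfolding Arg_def by auto
  have fb': "finite (fst b')" using b' unfolding Arg_def by auto
  have "defends der contr hat S' E b" using E b unfolding complete_def admissible_def by blast
  hence "defends der contr hat S' E b'"
    unfolding defends_def using att_mono[OF fb fb' sub] by blast
  thus ?thesis using E b' unfolding complete_def by blast
qed

lemma K1:
  assumes E: "complete der contr hat S E"
  shows "complete der contr hat S1 (E \<inter> Arg der S1)"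
proof -
  have EA: "E \<subseteq> Arg der S" and cf: "conflict_free contr hat E"
    and df: "\<forall>a\<in>E. defends der contr hat S E a"
    and cl: "\<forall>a\<in>Arg der S. defends der contr hat S E a \<longrightarrow> a \<in> E"
    using E unfolding complete_def admissible_def by blast+
  have red_in: "\<exists>c'\<in>E \<inter> Arg der S1. att c' b" if c: "c \<in> E" "att c b" and b: "b \<in> Arg der S1" for c b
  proof -
    obtain c' where c': "c' \<in> Arg der S1" "fst c' \<subseteq> fst c" "att c' b"
      using red_att[of c b] c b EA by blast
    have "c' \<in> E" using K0[OF E c(1) _ c'(2)] c'(1) Arg_sub by blast
    thus ?thesis using c' by blast
  qed
  have "admissible der contr hat S1 (E \<inter> Arg der S1)"
    unfolding admissible_def
  proof (intro conjI)
    show "E \<inter> Arg der S1 \<subseteq> Arg der S1" by blast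
    show "conflict_free contr hat (E \<inter> Arg der S1)" using cf unfolding conflict_free_def by blast
    show "\<forall>a\<in>E \<inter> Arg der S1. defends der contr hat S1 (E \<inter> Arg der S1) a"
    proof
      fix a assume a: "a \<in> E \<inter> Arg der S1"
      show "defends der contr hat S1 (E \<inter> Arg der S1) a" unfolding defends_def
      proof (intro ballI impI)
        fix b assume b: "b \<in> Arg der S1" "att b a"
        then obtain c where "c \<in> E" "att c b" using df a Arg_sub unfolding defends_def by blast
        thus "\<exists>c\<in>E \<inter> Arg der S1. att c b" using red_in b by blast
      qed
    qed
  qed
  moreover have "a \<in> E \<inter> Arg der S1"
    if a: "a \<in> Arg der S1" "defends der contr hat S1 (E \<inter> Arg der S1) a" for a
  proof -
    have "defends der contr hat S E a" unfolding defends_def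
    proof (intro ballI impI)
      fix b assume b: "b \<in> Arg der S" "att b a"
      obtain b' where b': "b' \<in> Arg der S1" "fst b' \<subseteq> fst b" "att b' a" using red_att[OF b(1) a(1) b(2)] by blast
      then obtain c where c: "c \<in> E \<inter> Arg der S1" "att c b'" using a unfolding defends_def by blast
      have "finite (fst b)" "finite (fst b')" using b b' unfolding Arg_def by auto
      hence "att c b" using att_mono b' c by blast
      thus "\<exists>c\<in>E. att c b" using c by blast
    qed
    thus ?thesis using cl a Arg_sub by blast
  qed
  ultimately show ?thesis unfolding complete_def by blast
qed

lemma K2:
  assumes E: "admissible der contr hat S1 E"
  shows "admissible der contr hat S E"
  unfolding admissible_def
proof (intro conjI)
  show "E \<subseteq> Arg der S" using E Arg_sub unfolding admissible_def by blast
  show "conflict_free contr hat E" using E unfolding admissible_def by blast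
  show "\<forall>a\<in>E. defends der contr hat S E a"
  proof
    fix a assume a: "a \<in> E"
    have aA: "a \<in> Arg der S1" using a E unfolding admissible_def by blast
    show "defends der contr hat S E a" unfolding defends_def
    proof (intro ballI impI)
      fix b assume b: "b \<in> Arg der S" "att b a"
      obtain b' where b': "b' \<in> Arg der S1" "fst b' \<subseteq> fst b" "att b' a" using red_att[OF b(1) aA b(2)] by blast
      then obtain c where c: "c \<in> E" "att c b'" using E a unfolding admissible_def defends_def by blast
      have "finite (fst b)" "finite (fst b')" using b b' unfolding Arg_def by auto
      hence "att c b" using att_mono b' c by blast
      thus "\<exists>c\<in>E. att c b" using c by blast
    qed
  qed
qed

end


lemma nmcons_Grd: "nmcons Grd der contr hat X \<phi> \<longleftrightarrow> (\<exists>a\<in>lfp (defset der contr hat X). snd a = \<phi>)"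
  unfolding nmcons_def by (simp add: grounded_iff)

context ctx begin

lemma G_sub: "lfp (defset der contr hat S1) \<subseteq> lfp (defset der contr hat S)"
proof -
  have "complete der contr hat S1 (lfp (defset der contr hat S) \<inter> Arg der S1)"
    by (rule K1[OF lfp_complete])
  hence "lfp (defset der contr hat S1) \<subseteq> lfp (defset der contr hat S) \<inter> Arg der S1"
    by (rule complete_lfp_le)
  thus ?thesis by blast
qed

lemma G_red:
  assumes a: "a \<in> lfp (defset der contr hat S)" and a': "a' \<in> Arg der S1" and sub: "fst a' \<subseteq> fst a"
  shows "a' \<in> lfp (defset der contr hat S1)"
proof -
  let ?G1 = "lfp (defset der contr hat S1)"
  have G1: "?G1 = defset der contr hat S1 ?G1" by (rule lfp_unfold[OF mono_defset])
  define Y where "Y = {c \<in> Arg der S. \<forall>c'\<in>Arg der S1. fst c' \<subseteq> fst c \<longrightarrow> c' \<in> ?G1}"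
  have "defset der contr hat S Y \<subseteq> Y"
  proof
    fix c assume "c \<in> defset der contr hat S Y"
    hence cA: "c \<in> Arg der S" and cd: "defends der contr hat S Y c" unfolding defset_def by auto
    have "c' \<in> ?G1" if c': "c' \<in> Arg der S1" "fst c' \<subseteq> fst c" for c'
    proof -
      have fc: "finite (fst c)" "finite (fst c')" using cA c' unfolding Arg_def by auto
      have "defends der contr hat S1 ?G1 c'" unfolding defends_def
      proof (intro ballI impI)
        fix b' assume b': "b' \<in> Arg der S1" "att b' c'"
        have "att b' c" using att_mono[OF fc c'(2) b'(2)] .
        then obtain d where d: "d \<in> Y" "att d b'" using cd b'(1) Arg_sub unfolding defends_def by blast
        have dA: "d \<in> Arg der S" using d Y_def by simp
        obtain d' where d': "d' \<in> Arg der S1" "fst d' \<subseteq> fst d" "att d' b'"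
          using red_att[OF dA b'(1) d(2)] by blast
        have "d' \<in> ?G1" using d(1) d' unfolding Y_def by blast
        thus "\<exists>c\<in>?G1. att c b'" using d' by blast
      qed
      hence "c' \<in> defset der contr hat S1 ?G1" using c' unfolding defset_def by blast
      thus ?thesis using G1 by simp
    qed
    thus "c \<in> Y" using cA unfolding Y_def by blast
  qed
  hence "lfp (defset der contr hat S) \<subseteq> Y" by (rule lfp_lowerbound)
  thus ?thesis using a a' sub unfolding Y_def by blast
qed

lemma Grd_eq: "nmcons Grd der contr hat S1 \<phi> \<longleftrightarrow> nmcons Grd der contr hat S \<phi>"
proof
  assume "nmcons Grd der contr hat S1 \<phi>"
  thus "nmcons Grd der contr hat S \<phi>" using G_sub unfolding nmcons_Grd by blast
next
  assume "nmcons Grd der contr hat S \<phi>"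
  then obtain a where a: "a \<in> lfp (defset der contr hat S)" "snd a = \<phi>" unfolding nmcons_Grd by blast
  obtain \<Delta> where ad: "a = (\<Delta>, \<phi>)" using a(2) by (cases a) auto
  have "a \<in> Arg der S" using lfp_complete[of der contr hat S] a unfolding complete_def admissible_def by blast
  then obtain \<Delta>' where "\<Delta>' \<subseteq> \<Delta>" "(\<Delta>', \<phi>) \<in> Arg der S1" using red_conc ad by blast
  hence "(\<Delta>', \<phi>) \<in> lfp (defset der contr hat S1)" using G_red[OF a(1)] ad by auto
  thus "nmcons Grd der contr hat S1 \<phi>" unfolding nmcons_Grd by force
qed

lemma Prf_eq: "nmcons Prf der contr hat S1 \<phi> \<longleftrightarrow> nmcons Prf der contr hat S \<phi>"
proof
  assume h: "nmcons Prf der contr hat S1 \<phi>"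
  show "nmcons Prf der contr hat S \<phi>" unfolding nmcons_def
  proof (intro allI impI)
    fix E assume "extension Prf der contr hat S E"
    hence pE: "preferred der contr hat S E" by simp
    hence cE: "complete der contr hat S E" unfolding preferred_def by blast
    have EA: "E \<subseteq> Arg der S" and cfE: "conflict_free contr hat E"
      and dfE: "\<forall>a\<in>E. defends der contr hat S E a"
      using cE unfolding complete_def admissible_def by blast+
    have c1: "complete der contr hat S1 (E \<inter> Arg der S1)" by (rule K1[OF cE])
    have "\<not> (\<exists>E'. complete der contr hat S1 E' \<and> E \<inter> Arg der S1 \<subset> E')"
    proof
      assume "\<exists>E'. complete der contr hat S1 E' \<and> E \<inter> Arg der S1 \<subset> E'"
      then obtain E1 where E1: "complete der contr hat S1 E1" "E \<inter> Arg der S1 \<subset> E1" by blast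
      have a1: "admissible der contr hat S1 E1" using E1 unfolding complete_def by blast
      have a1S: "admissible der contr hat S E1" by (rule K2[OF a1])
      have E1A: "E1 \<subseteq> Arg der S1" and cf1: "conflict_free contr hat E1"
        using a1 unfolding admissible_def by blast+
      have x1: "\<not> att e a" if th: "e \<in> E" "a \<in> E1" for e a
      proof
        assume ea: "att e a"
        obtain e' where e': "e' \<in> Arg der S1" "fst e' \<subseteq> fst e" "att e' a"
          using red_att[of e a] th ea EA E1A by blast
        have "e' \<in> E" using K0[OF cE th(1) _ e'(2)] e'(1) Arg_sub by blast
        hence "e' \<in> E1" using e'(1) E1(2) by blast
        thus False using cf1 th(2) e'(3) unfolding conflict_free_def by blast
      qed
      have x2: "\<not> att a e" if th: "e \<in> E" "a \<in> E1" for e a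
      proof
        assume ae: "att a e"
        have "a \<in> Arg der S" using th E1A Arg_sub by blast
        then obtain c where "c \<in> E" "att c a" using dfE th ae unfolding defends_def by blast
        thus False using x1 th by blast
      qed
      have "admissible der contr hat S (E \<union> E1)"
        unfolding admissible_def
      proof (intro conjI)
        show "E \<union> E1 \<subseteq> Arg der S" using EA E1A Arg_sub by blast
        show "conflict_free contr hat (E \<union> E1)" using cfE cf1 x1 x2 unfolding conflict_free_def by blast
        show "\<forall>a\<in>E \<union> E1. defends der contr hat S (E \<union> E1) a"
          using dfE a1S defends_mono[of der contr hat S E _ "E \<union> E1"]
            defends_mono[of der contr hat S E1 _ "E \<union> E1"] unfolding admissible_def by blast
      qed
      hence "E \<union> E1 = E" using preferred_max_adm[OF pE] by blast
      thus False using E1(2) E1A by blast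
    qed
    hence "preferred der contr hat S1 (E \<inter> Arg der S1)" using c1 unfolding preferred_def by blast
    then obtain a where "a \<in> E \<inter> Arg der S1" "snd a = \<phi>" using h unfolding nmcons_def by fastforce
    thus "\<exists>a\<in>E. snd a = \<phi>" by blast
  qed
next
  assume h: "nmcons Prf der contr hat S \<phi>"
  show "nmcons Prf der contr hat S1 \<phi>" unfolding nmcons_def
  proof (intro allI impI)
    fix E1 assume "extension Prf der contr hat S1 E1"
    hence p1: "preferred der contr hat S1 E1" by simp
    hence "admissible der contr hat S1 E1" unfolding preferred_def complete_def by blast
    hence "admissible der contr hat S E1" by (rule K2)
    then obtain M where M: "admissible der contr hat S M" "E1 \<subseteq> M"
      "\<forall>Y. admissible der contr hat S Y \<and> M \<subseteq> Y \<longrightarrow> Y = M" using adm_extend by blast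
    have pM: "preferred der contr hat S M" using max_adm_preferred M by blast
    hence cM: "complete der contr hat S M" unfolding preferred_def by blast
    obtain a where a: "a \<in> M" "snd a = \<phi>" using h pM unfolding nmcons_def by fastforce
    obtain \<Delta> where ad: "a = (\<Delta>, \<phi>)" using a(2) by (cases a) auto
    have "a \<in> Arg der S" using cM a unfolding complete_def admissible_def by blast
    then obtain \<Delta>' where D': "\<Delta>' \<subseteq> \<Delta>" "(\<Delta>', \<phi>) \<in> Arg der S1" using red_conc ad by blast
    have inM: "(\<Delta>', \<phi>) \<in> M" using K0[OF cM a(1)] D' ad Arg_sub by auto
    have c1: "complete der contr hat S1 (M \<inter> Arg der S1)" by (rule K1[OF cM])
    have E1A: "E1 \<subseteq> Arg der S1" using p1 unfolding preferred_def complete_def admissible_def by blast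
    have "\<not> E1 \<subset> M \<inter> Arg der S1" using p1 c1 unfolding preferred_def by blast
    hence "M \<inter> Arg der S1 = E1" using M(2) E1A by blast
    hence "(\<Delta>', \<phi>) \<in> E1" using inM D' by blast
    thus "\<exists>a\<in>E1. snd a = \<phi>" by force
  qed
qed

end

theorem theorem1:
  fixes at :: "'f \<Rightarrow> 'a set" and der :: "'f set \<Rightarrow> 'f \<Rightarrow> bool"
    and contr :: "'f \<Rightarrow> 'f set" and hat :: "'f set \<Rightarrow> 'f set"
  assumes "setting hat"
    and "pre_relevance at der contr hat"
    and "Sem \<in> {Grd, Prf}"
  shows "non_interference at Sem der contr hat"
  unfolding non_interference_def
proof (intro allI impI)
  fix S1 S2 \<phi> assume "indep at (S1 \<union> {\<phi>}) S2"
  then interpret ctx at der contr hat S1 S2 \<phi> using assms by unfold_locales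
  show "nmcons Sem der contr hat S1 \<phi> = nmcons Sem der contr hat (S1 \<union> S2) \<phi>"
    using assms(3) Grd_eq Prf_eq by auto
qed

end
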